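(* Let $n\ge0$ and set $\xi_0=1$, $\xi_{n+2}=-1$, and $\xi_k=\cos\frac{(2k-1)\pi}{2n+2}$ for $1\le k\le n+1$. Then $1=\xi_0>\xi_1>\cdots>\xi_{n+1}>\xi_{n+2}=-1$, and for each $1\le k\le n+1$ the polynomial $S_{2n+1}(x)$ has exactly one zero in $(\xi_{k+1},\xi_k)$. These $n+1$ zeros together with $x=1$ are all the zeros of $S_{2n+1}(x)$, and all of them are simple.
   Context: $U_n(x)$ is the Chebyshev polynomial of the second kind ($U_n(\cos\theta)=\sin((n+1)\theta)/\sin\theta$), with $U_{-1}=0$. For $n\ge0$, $S_{2n+1}(x)=2(2nx^2+2x^2+2nx-x-1)U_n(x)-2(2nx+3x+2n+1)U_{n-1}(x)$, a polynomial of degree $n+2$. *)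

theory Defs
  imports Complex_Main "HOL-Computational_Algebra.Polynomial"
begin

text \<open>Chebyshev polynomials of the second kind, via the standard recurrence
  U_0 = 1, U_1 = 2x, U_(n+2) = 2x U_(n+1) - U_n (equivalent to
  U_n(cos t) = sin((n+1)t)/sin t).\<close>
fun chebU :: "nat \<Rightarrow> real poly" where
  "chebU 0 = 1"
| "chebU (Suc 0) = [:0, 2:]"
| "chebU (Suc (Suc n)) = [:0, 2:] * chebU (Suc n) - chebU n"

definition chebU_prev :: "nat \<Rightarrow> real poly" where
  "chebU_prev n = (if n = 0 then 0 else chebU (n - 1))"

definition S_odd :: "nat \<Rightarrow> real poly" where
  "S_odd n = smult 2 ([:-1, 2 * real n - 1, 2 * real n + 2:] * chebU n)
             - smult 2 ([:2 * real n + 1, 2 * real n + 3:] * chebU_prev n)"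

definition xi :: "nat \<Rightarrow> nat \<Rightarrow> real" where
  "xi n k = (if k = 0 then 1 else if k = n + 2 then -1
             else cos ((2 * real k - 1) * pi / (2 * real n + 2)))"

end

theory Submission imports Defs "HOL-Computational_Algebra.Fundamental_Theorem_Algebra" "HOL-Library.Multiset" begin

lemma chebU_sin: "poly (chebU n) (cos t) * sin t = sin (real (Suc n) * t)"
proof (induction n rule: chebU.induct)
  case 1 then show ?case by simp
next
  case 2 then show ?case by (simp add: mult.commute[of t 2] sin_double)
next
  case (3 n)
  have e: "sin (real (Suc (Suc (Suc n))) * t) = 2 * cos t * sin (real (Suc (Suc n)) * t) - sin (real (Suc n) * t)"
  proof -
    have a: "real (Suc (Suc (Suc n))) * t = real (Suc (Suc n)) * t + t" by (simp add: algebra_simps)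
    have b: "real (Suc n) * t = real (Suc (Suc n)) * t - t" by (simp add: algebra_simps)
    show ?thesis unfolding a b sin_add sin_diff by (simp add: algebra_simps)
  qed
  have "poly (chebU (Suc (Suc n))) (cos t) * sin t
      = 2 * cos t * (poly (chebU (Suc n)) (cos t) * sin t) - poly (chebU n) (cos t) * sin t"
    by (simp add: algebra_simps)
  also have "\<dots> = sin (real (Suc (Suc (Suc n))) * t)" using 3 e by simp
  finally show ?case .
qed

lemma chebU_prev_sin: "poly (chebU_prev n) (cos t) * sin t = sin (real n * t)"
  by (cases n) (auto simp: chebU_prev_def chebU_sin)

lemma chebU_deg: "degree (chebU n) \<le> n"
proof (induction n rule: chebU.induct)
  case (3 n)
  have "degree ([:0, 2:] * chebU (Suc n)) \<le> Suc (Suc n)"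
    using degree_mult_le[of "[:0,2:]" "chebU (Suc n)"] 3 by auto
  moreover have "degree (chebU n) \<le> Suc (Suc n)" using 3 by auto
  ultimately show ?case by (simp add: degree_diff_le)
qed auto

lemma S_deg: "degree (S_odd n) \<le> n + 2"
proof -
  have d1: "degree (chebU_prev n) \<le> n" using chebU_deg[of "n-1"] by (auto simp: chebU_prev_def)
  have "degree ([:-1, 2 * real n - 1, 2 * real n + 2:] * chebU n) \<le> n + 2"
    using degree_mult_le[of "[:-1, 2 * real n - 1, 2 * real n + 2:]" "chebU n"] chebU_deg[of n]
    by (auto simp: degree_pCons_eq_if)
  moreover have "degree ([:2 * real n + 1, 2 * real n + 3:] * chebU_prev n) \<le> n + 2"
    using degree_mult_le[of "[:2 * real n + 1, 2 * real n + 3:]" "chebU_prev n"] d1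
    by (auto simp: degree_pCons_eq_if)
  ultimately show ?thesis unfolding S_odd_def
    by (intro degree_diff_le) auto
qed

lemma chebU_one: "poly (chebU n) 1 = real (Suc n)"
  by (induction n rule: chebU.induct) (auto simp: algebra_simps)

lemma chebU_mone: "poly (chebU n) (-1) = (-1)^n * real (Suc n)"
  by (induction n rule: chebU.induct) (auto simp: algebra_simps)

lemma S_one: "poly (S_odd n) 1 = 0"
  by (cases n) (auto simp: S_odd_def chebU_prev_def chebU_one algebra_simps)

lemma S_mone: "poly (S_odd n) (-1) = 4 * (-1)^n"
  by (cases n) (auto simp: S_odd_def chebU_prev_def chebU_mone algebra_simps)

lemma S_trig:
  assumes "cos (real (Suc n) * t) = 0" "sin t \<noteq> 0"
  shows "poly (S_odd n) (cos t) = - 2 * sin (real (Suc n) * t) * (1 + cos t)^2 / sin t"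
proof -
  have sn: "sin (real n * t) = sin (real (Suc n) * t) * cos t"
  proof -
    have "real n * t = real (Suc n) * t - t" by (simp add: algebra_simps)
    then show ?thesis using assms(1) by (simp add: sin_diff)
  qed
  define c where "c = cos t"
  define A where "A = poly (chebU n) c"
  define B where "B = poly (chebU_prev n) c"
  define s1 where "s1 = sin (real (Suc n) * t)"
  have hA: "A * sin t = s1" unfolding A_def s1_def c_def by (rule chebU_sin)
  have hB: "B * sin t = s1 * c" unfolding B_def s1_def c_def using chebU_prev_sin[of n t] sn by simp
  have "poly (S_odd n) c * sin t = 2 * (-1 + (2 * real n - 1) * c + (2 * real n + 2) * c^2) * (A * sin t)
       - 2 * (2 * real n + 1 + (2 * real n + 3) * c) * (B * sin t)"
    unfolding S_odd_def A_def B_def by (simp add: algebra_simps power2_eq_square)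
  also have "\<dots> = - 2 * s1 * (1 + c)^2" unfolding hA hB by (simp add: algebra_simps power2_eq_square)
  finally have "poly (S_odd n) (cos t) * sin t = - 2 * sin (real (Suc n) * t) * (1 + cos t)^2"
    unfolding c_def s1_def .
  then show ?thesis using assms(2) by (simp add: field_simps)
qed

definition th :: "nat \<Rightarrow> nat \<Rightarrow> real" where
  "th n k = (2 * real k - 1) * pi / (2 * real n + 2)"

lemma th_range: "1 \<le> k \<Longrightarrow> k \<le> n + 1 \<Longrightarrow> 0 < th n k \<and> th n k < pi"
proof -
  assume k: "1 \<le> k" "k \<le> n + 1"
  have a: "2 * real k - 1 > 0" using k by simp
  have b: "(2 * real k - 1) * pi < (2 * real n + 2) * pi"
    using k by (intro mult_strict_right_mono) auto
  have c: "2 * real n + 2 > 0" by simp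
  show ?thesis unfolding th_def using a b c
    by (auto simp: divide_less_eq)
qed

lemma xi_th: "1 \<le> k \<Longrightarrow> k \<le> n + 1 \<Longrightarrow> xi n k = cos (th n k)"
  by (simp add: xi_def th_def)

lemma th_mono: "th n k < th n (k+1)"
  by (simp add: th_def divide_strict_right_mono)

lemma xi_step: "k \<le> n + 1 \<Longrightarrow> xi n (k + 1) < xi n k"
proof -
  assume k: "k \<le> n + 1"
  consider "k = 0" | "1 \<le> k \<and> k \<le> n" | "k = n + 1" using k by linarith
  then show ?thesis
  proof cases
    case 1
    have "cos (th n 1) < cos 0" using th_range[of 1 n] by (intro cos_monotone_0_pi) auto
    then show ?thesis using 1 xi_th[of 1 n] by (simp add: xi_def)
  next
    case 2
    have "cos (th n (k+1)) < cos (th n k)" using th_range[of k n] th_range[of "k+1" n] 2 th_mono[of n k]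
      by (intro cos_monotone_0_pi) auto
    then show ?thesis using 2 xi_th[of k n] xi_th[of "k+1" n] by simp
  next
    case 3
    have "cos pi < cos (th n (n+1))" using th_range[of "n+1" n] by (intro cos_monotone_0_pi) auto
    then show ?thesis using 3 xi_th[of "n+1" n] by (simp add: xi_def)
  qed
qed

lemma xi_mono: "i < j \<Longrightarrow> j \<le> n + 2 \<Longrightarrow> xi n j < xi n i"
proof (induction j)
  case 0 then show ?case by simp
next
  case (Suc j)
  show ?case
  proof (cases "i = j")
    case True then show ?thesis using xi_step[of j n] Suc.prems by simp
  next
    case False
    then have "xi n j < xi n i" using Suc by simp
    moreover have "xi n (Suc j) < xi n j" using xi_step[of j n] Suc.prems by simp
    ultimately show ?thesis by simp
  qed
qed

lemma S_sign: "1 \<le> k \<Longrightarrow> k \<le> n + 2 \<Longrightarrow> (-1)^k * poly (S_odd n) (xi n k) > 0"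
proof -
  assume k: "1 \<le> k" "k \<le> n + 2"
  show ?thesis
  proof (cases "k = n + 2")
    case True
    then show ?thesis by (simp add: xi_def S_mone power_add flip: power_mult_distrib)
  next
    case False
    then have k2: "k \<le> n + 1" using k by simp
    define t where "t = th n k"
    have tr: "0 < t" "t < pi" using th_range[OF k(1) k2] t_def by auto
    have e: "real (Suc n) * t = real (k - 1) * pi + pi / 2"
      using k unfolding t_def th_def by (simp add: field_simps of_nat_diff)
    have c0: "cos (real (Suc n) * t) = 0" unfolding e by (simp add: cos_add)
    have s1: "sin (real (Suc n) * t) = (-1)^(k-1)" unfolding e by (simp add: sin_add)
    have st: "sin t > 0" using tr sin_gt_zero by auto
    have cg: "cos t > -1"
    proof -
      have "cos pi < cos t" using tr by (intro cos_monotone_0_pi) auto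
      then show ?thesis by simp
    qed
    have kk: "(-1::real)^k * (-1)^(k-1) = -1"
    proof -
      obtain j where "k = Suc j" using k by (cases k) auto
      then show ?thesis by (simp flip: power_add add: power_mult_distrib[symmetric])
    qed
    have "(-1)^k * poly (S_odd n) (xi n k) = 2 * (1 + cos t)^2 / sin t * (- ((-1)^k * (-1)^(k-1)))"
      using S_trig[OF c0] st xi_th[OF k(1) k2] t_def s1 by (simp add: field_simps)
    also have "\<dots> = 2 * (1 + cos t)^2 / sin t" using kk by simp
    also have "\<dots> > 0" using st cg by (intro divide_pos_pos) auto
    finally show ?thesis .
  qed
qed

lemma roots_simple:
  fixes p :: "complex poly"
  assumes "p \<noteq> 0" "finite R" "degree p \<le> card R" "\<And>a. a \<in> R \<Longrightarrow> poly p a = 0"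
  shows "{z. poly p z = 0} = R \<and> (\<forall>z\<in>R. order z p = 1)"
proof -
  define M where "M = mset_set R"
  have sub: "M \<subseteq># proots p"
    unfolding subseteq_mset_def M_def
  proof
    fix a show "count (mset_set R) a \<le> count (proots p) a"
      using assms order_root[of p a] by (cases "a \<in> R") (auto simp: count_mset_set')
  qed
  have "size (proots p) \<le> size M" using size_proots_complex[of p] assms M_def by simp
  then have eq: "M = proots p" using sub mset_subset_size[of M "proots p"]
    by (metis subset_mset.le_imp_less_or_eq leD)
  have "{z. poly p z = 0} = R" using set_count_proots[OF assms(1)] eq assms(2) M_def by (metis finite_set_mset_mset_set)
  moreover have "\<forall>z\<in>R. order z p = 1"
    using eq count_proots[OF assms(1)] assms(2) M_def by (metis count_mset_set(1))
  ultimately show ?thesis by blast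
qed

lemma poly_map_of_real: "poly (map_poly complex_of_real p) (of_real x) = of_real (poly p x)"
  by (induction p) (auto simp: map_poly_pCons)

lemma xi_le: "i \<le> j \<Longrightarrow> j \<le> n + 2 \<Longrightarrow> xi n j \<le> xi n i"
  using xi_mono[of i j n] by (cases "i = j") auto

theorem mainTheorem15:
  fixes n :: nat
  shows "xi n 0 = 1 \<and> xi n (n + 2) = -1
    \<and> (\<forall>k \<le> n + 1. xi n (k + 1) < xi n k)
    \<and> (\<forall>k \<in> {1..n+1}. \<exists>!x. xi n (k + 1) < x \<and> x < xi n k \<and> poly (S_odd n) x = 0)
    \<and> poly (S_odd n) 1 = 0
    \<and> (\<forall>z::complex. poly (map_poly complex_of_real (S_odd n)) z = 0 \<longrightarrow>
          (\<exists>x. z = complex_of_real x \<and>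
               (x = 1 \<or> (\<exists>k \<in> {1..n+1}. xi n (k + 1) < x \<and> x < xi n k))))
    \<and> (\<forall>z::complex. poly (map_poly complex_of_real (S_odd n)) z = 0 \<longrightarrow>
          order z (map_poly complex_of_real (S_odd n)) = 1)"
proof -
  define S where "S = S_odd n"
  have ex: "\<forall>k\<in>{1..n+1}. \<exists>x. xi n (k + 1) < x \<and> x < xi n k \<and> poly S x = 0"
  proof
    fix k assume k: "k \<in> {1..n+1}"
    have a: "(-1)^k * poly S (xi n k) > 0" using S_sign[of k n] k S_def by auto
    have b: "(-1)^(k+1) * poly S (xi n (k+1)) > 0" using S_sign[of "k+1" n] k S_def by auto
    have b': "(-1)^k * poly S (xi n (k+1)) < 0" using b by simp
    have "(-1::real)^k = 1 \<or> (-1::real)^k = -1" by (cases "even k") auto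
    then have "poly S (xi n (k+1)) * poly S (xi n k) < 0"
    proof
      assume h: "(-1::real)^k = 1"
      show ?thesis using a b' unfolding h by (simp add: mult_neg_pos)
    next
      assume h: "(-1::real)^k = -1"
      show ?thesis using a b' unfolding h by (simp add: mult_pos_neg)
    qed
    then show "\<exists>x. xi n (k + 1) < x \<and> x < xi n k \<and> poly S x = 0"
      using poly_IVT[of "xi n (k+1)" "xi n k" S] xi_step[of k n] k by auto
  qed
  then obtain r where r: "\<And>k. k\<in>{1..n+1} \<Longrightarrow> xi n (k + 1) < r k \<and> r k < xi n k \<and> poly S (r k) = 0"
    by metis
  define r' where "r' k = (if k = 0 then 1 else r k)" for k
  have r'root: "poly S (r' k) = 0" if "k \<le> n + 1" for k
    using r[of k] that S_one[of n] S_def unfolding r'_def by auto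
  have r'dec: "r' j < r' i" if "i < j" "j \<le> n + 1" for i j
  proof (cases "i = 0")
    case True
    have "r j < xi n j" using r[of j] that by auto
    also have "\<dots> < xi n 0" using xi_mono[of 0 j n] that by auto
    finally show ?thesis using True that by (simp add: r'_def xi_def)
  next
    case False
    have "r j < xi n j" using r[of j] that by auto
    also have "\<dots> \<le> xi n (i+1)" using xi_le[of "i+1" j n] that by auto
    also have "\<dots> < r i" using r[of i] that False by auto
    finally show ?thesis using False that by (simp add: r'_def)
  qed
  define p where "p = map_poly complex_of_real S"
  define R where "R = (\<lambda>k. complex_of_real (r' k)) ` {0..n+1}"
  have inj: "inj_on (\<lambda>k. complex_of_real (r' k)) {0..n+1}"
  proof (rule inj_onI)
    fix i j assume ij: "i \<in> {0..n+1}" "j \<in> {0..n+1}" "complex_of_real (r' i) = complex_of_real (r' j)"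
    then have e: "r' i = r' j" by simp
    show "i = j"
    proof (rule ccontr)
      assume "i \<noteq> j"
      then consider "i < j" | "j < i" by linarith
      then show False using r'dec[of i j] r'dec[of j i] ij e by cases auto
    qed
  qed
  have cardR: "card R = n + 2" unfolding R_def using card_image[OF inj] by simp
  have pS: "poly p (of_real x) = of_real (poly S x)" for x unfolding p_def by (rule poly_map_of_real)
  have p0: "p \<noteq> 0"
  proof
    assume "p = 0"
    then have "poly p (of_real (-1)) = 0" by simp
    then show False using pS[of "-1"] S_mone[of n] S_def by simp
  qed
  have degp: "degree p \<le> card R"
    unfolding p_def cardR using S_deg[of n] S_def by (subst degree_map_poly) auto
  have Rroots: "poly p a = 0" if "a \<in> R" for a
    using that r'root pS unfolding R_def by auto
  have main: "{z. poly p z = 0} = R \<and> (\<forall>z\<in>R. order z p = 1)"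
    by (rule roots_simple[OF p0 _ degp Rroots]) (auto simp: R_def)
  have uniq: "y = r k" if k: "k \<in> {1..n+1}" and y: "xi n (k + 1) < y" "y < xi n k" "poly S y = 0" for k y
  proof -
    have "of_real y \<in> R" using main pS[of y] y(3) by auto
    then obtain j where j: "j \<le> n + 1" "y = r' j" unfolding R_def by auto
    show ?thesis
    proof (cases "j = 0")
      case True
      have "xi n k < xi n 0" using xi_mono[of 0 k n] k by auto
      then show ?thesis using True j y by (simp add: r'_def xi_def)
    next
      case False
      have rj: "xi n (j + 1) < r j" "r j < xi n j" using r[of j] j False by auto
      consider "j < k" | "j = k" | "k < j" by linarith
      then show ?thesis
      proof cases
        case 1
        have "xi n k \<le> xi n (j+1)" using xi_le[of "j+1" k n] 1 k by auto
        then show ?thesis using rj y j False by (simp add: r'_def)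
      next
        case 2 then show ?thesis using j False by (simp add: r'_def)
      next
        case 3
        have "xi n j \<le> xi n (k+1)" using xi_le[of "k+1" j n] 3 j by auto
        then show ?thesis using rj y j False by (simp add: r'_def)
      qed
    qed
  qed
  have P1: "\<forall>k \<in> {1..n+1}. \<exists>!x. xi n (k + 1) < x \<and> x < xi n k \<and> poly (S_odd n) x = 0"
  proof
    fix k assume k: "k \<in> {1..n+1}"
    show "\<exists>!x. xi n (k + 1) < x \<and> x < xi n k \<and> poly (S_odd n) x = 0"
      using r[OF k] uniq[OF k] S_def by (intro ex1I[of _ "r k"]) auto
  qed
  have P2: "\<forall>z::complex. poly p z = 0 \<longrightarrow>
          (\<exists>x. z = complex_of_real x \<and>
               (x = 1 \<or> (\<exists>k \<in> {1..n+1}. xi n (k + 1) < x \<and> x < xi n k)))"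
  proof (intro allI impI)
    fix z assume "poly p z = 0"
    then have "z \<in> R" using main by auto
    then obtain j where j: "j \<le> n + 1" "z = of_real (r' j)" unfolding R_def by auto
    show "\<exists>x. z = complex_of_real x \<and>
               (x = 1 \<or> (\<exists>k \<in> {1..n+1}. xi n (k + 1) < x \<and> x < xi n k))"
    proof (cases "j = 0")
      case True then show ?thesis using j by (auto simp: r'_def)
    next
      case False
      then have "j \<in> {1..n+1}" using j by auto
      then show ?thesis using j r[of j] False by (auto simp: r'_def)
    qed
  qed
  have P3: "\<forall>z::complex. poly p z = 0 \<longrightarrow> order z p = 1" using main by auto
  show ?thesis
    using xi_step[of _ n] P1 P2 P3 S_one[of n] unfolding p_def S_def
    by (simp add: xi_def)
qed

end
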